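(* For every single-elimination tournament $\mathcal{T}$ with $n$ players and every scoring system $\sigma$ of $\mathcal{T}$, we have $\dim(\mathcal{T},\sigma)\le n-1$.
   Context: A single-elimination tournament is a finite directed graph $\mathcal{T}$ such that: (a) $\mathcal{T}$ has exactly one sink (vertex with no out-neighbours); (b) every non-sink vertex has exactly one out-neighbour; (c) $\mathcal{T}$ has no directed cycles; (d) $|N^-(v)|\ne 1$ for every vertex $v$, where $N^-(v)$ denotes the set of in-neighbours of $v$. The players $P(\mathcal{T})$ are the sources (vertices with no in-neighbours) and the matches are $M(\mathcal{T})=V(\mathcal{T})\setminus P(\mathcal{T})$. A bracket is a function $B:V(\mathcal{T})\to P(\mathcal{T})$ with $B(a)=a$ for every player $a$ and $B(x)\in\{B(u):u\in N^-(x)\}$ for every match $x$. A scoring system is any function $\sigma:M(\mathcal{T})\to\mathbb{R}_{>0}$. For brackets $B,B'$ let $\mathrm{score}_\sigma(B,B')=\sum_{x\in M(\mathcal{T}):\,B(x)=B'(x)}\sigma(x)$. A set of brackets $\mathcal{B}$ is $\sigma$-resolving if for every pair of distinct brackets $B\ne B'$ there is $B_i\in\mathcal{B}$ with $\mathrm{score}_\sigma(B_i,B)\ne\mathrm{score}_\sigma(B_i,B')$. $\dim(\mathcal{T},\sigma)$ denotes the minimum size of a $\sigma$-resolving set. *)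

theory Defs
  imports Complex_Main "HOL-Library.FuncSet"
begin

definition out_nbrs :: "('v \<times> 'v) set \<Rightarrow> 'v \<Rightarrow> 'v set" where
  "out_nbrs E v = {w. (v, w) \<in> E}"

definition in_nbrs :: "('v \<times> 'v) set \<Rightarrow> 'v \<Rightarrow> 'v set" where
  "in_nbrs E v = {u. (u, v) \<in> E}"

definition sinks :: "'v set \<Rightarrow> ('v \<times> 'v) set \<Rightarrow> 'v set" where
  "sinks V E = {v \<in> V. out_nbrs E v = {}}"

definition single_elim_tournament :: "'v set \<Rightarrow> ('v \<times> 'v) set \<Rightarrow> bool" where
  "single_elim_tournament V E \<longleftrightarrow>
     finite V \<and> E \<subseteq> V \<times> V \<and>
     card (sinks V E) = 1 \<and>
     (\<forall>v \<in> V - sinks V E. card (out_nbrs E v) = 1) \<and>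
     acyclic E \<and>
     (\<forall>v \<in> V. card (in_nbrs E v) \<noteq> 1)"

definition players :: "'v set \<Rightarrow> ('v \<times> 'v) set \<Rightarrow> 'v set" where
  "players V E = {v \<in> V. in_nbrs E v = {}}"

definition matches :: "'v set \<Rightarrow> ('v \<times> 'v) set \<Rightarrow> 'v set" where
  "matches V E = V - players V E"

text \<open>Brackets are functions V \<rightarrow> P(T); outside V they are fixed to undefined
  (extensional), so that distinct brackets are distinct as functions on V.\<close>
definition bracket :: "'v set \<Rightarrow> ('v \<times> 'v) set \<Rightarrow> ('v \<Rightarrow> 'v) \<Rightarrow> bool" where
  "bracket V E B \<longleftrightarrow>
     B \<in> extensional V \<and>
     (\<forall>v \<in> V. B v \<in> players V E) \<and>
     (\<forall>a \<in> players V E. B a = a) \<and>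
     (\<forall>x \<in> matches V E. B x \<in> B ` in_nbrs E x)"

definition scoring_system :: "'v set \<Rightarrow> ('v \<times> 'v) set \<Rightarrow> ('v \<Rightarrow> real) \<Rightarrow> bool" where
  "scoring_system V E \<sigma> \<longleftrightarrow> (\<forall>x \<in> matches V E. \<sigma> x > 0)"

definition score :: "'v set \<Rightarrow> ('v \<times> 'v) set \<Rightarrow> ('v \<Rightarrow> real) \<Rightarrow> ('v \<Rightarrow> 'v) \<Rightarrow> ('v \<Rightarrow> 'v) \<Rightarrow> real" where
  "score V E \<sigma> B B' = (\<Sum>x \<in> {x \<in> matches V E. B x = B' x}. \<sigma> x)"

definition resolving :: "'v set \<Rightarrow> ('v \<times> 'v) set \<Rightarrow> ('v \<Rightarrow> real) \<Rightarrow> ('v \<Rightarrow> 'v) set \<Rightarrow> bool" where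
  "resolving V E \<sigma> S \<longleftrightarrow>
     S \<subseteq> {B. bracket V E B} \<and>
     (\<forall>B B'. bracket V E B \<longrightarrow> bracket V E B' \<longrightarrow> B \<noteq> B' \<longrightarrow>
        (\<exists>Bi \<in> S. score V E \<sigma> Bi B \<noteq> score V E \<sigma> Bi B'))"

definition tdim :: "'v set \<Rightarrow> ('v \<times> 'v) set \<Rightarrow> ('v \<Rightarrow> real) \<Rightarrow> nat" where
  "tdim V E \<sigma> = (LEAST k. \<exists>S. finite S \<and> card S = k \<and> resolving V E \<sigma> S)"

end

theory Submission
  imports Defs
begin

definition detE :: "('v \<times> 'v) set \<Rightarrow> bool" where
  "detE E \<longleftrightarrow> (\<forall>v w1 w2. (v,w1) \<in> E \<longrightarrow> (v,w2) \<in> E \<longrightarrow> w1 = w2)"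

lemma detD: "detE E \<Longrightarrow> (v,w1) \<in> E \<Longrightarrow> (v,w2) \<in> E \<Longrightarrow> w1 = w2"
  unfolding detE_def by blast

lemma set_facts:
  assumes "single_elim_tournament V E"
  shows "finite V" "E \<subseteq> V \<times> V" "acyclic E" "wf E" "detE E"
proof -
  show fV: "finite V" and EV: "E \<subseteq> V \<times> V" and ac: "acyclic E"
    using assms unfolding single_elim_tournament_def by auto
  have "finite E" using fV EV finite_subset by blast
  then show "wf E" using ac by (simp add: finite_acyclic_wf)
  show "detE E" unfolding detE_def
  proof (intro allI impI)
    fix v w1 w2 assume h1: "(v,w1) \<in> E" and h2: "(v,w2) \<in> E"
    have "v \<in> V" using h1 EV by auto
    have "v \<notin> sinks V E" using h1 unfolding sinks_def out_nbrs_def by auto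
    then have "card (out_nbrs E v) = 1" using assms \<open>v\<in>V\<close> unfolding single_elim_tournament_def by auto
    then obtain w where "out_nbrs E v = {w}" by (auto simp: card_Suc_eq)
    moreover have "w1 \<in> out_nbrs E v" "w2 \<in> out_nbrs E v" using h1 h2 unfolding out_nbrs_def by auto
    ultimately show "w1 = w2" by simp
  qed
qed

lemma chain:
  assumes det: "detE E" and pu: "(p,u) \<in> E\<^sup>*"
  shows "(p,z) \<in> E\<^sup>* \<Longrightarrow> (u,z) \<in> E\<^sup>* \<or> (z,u) \<in> E\<^sup>*"
  using pu
proof (induction arbitrary: z rule: converse_rtrancl_induct)
  case base then show ?case by simp
next
  case (step y y')
  from step.prems show ?case
  proof (cases rule: converse_rtranclE)
    assume "y = z"
    then have "(z,u) \<in> E\<^sup>*" using step.hyps by (meson converse_rtrancl_into_rtrancl)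
    then show ?thesis by simp
  next
    fix w assume "(y,w) \<in> E" "(w,z) \<in> E\<^sup>*"
    then have "w = y'" using detD[OF det] step.hyps(1) by metis
    then show ?thesis using step.IH \<open>(w,z) \<in> E\<^sup>*\<close> by blast
  qed
qed

lemma unique_pred:
  assumes det: "detE E" and ac: "acyclic E"
    and "(p,u) \<in> E\<^sup>*" "(p,z) \<in> E\<^sup>*" "(u,y) \<in> E" "(z,y) \<in> E"
  shows "u = z"
proof -
  have key: "u = z" if "(u,z) \<in> E\<^sup>*" "(u,y) \<in> E" "(z,y) \<in> E" for u z
  proof (rule ccontr)
    assume "u \<noteq> z"
    then have "(u,z) \<in> E\<^sup>+" using that(1) by (meson rtranclD)
    then obtain w where "(u,w) \<in> E" "(w,z) \<in> E\<^sup>*" by (meson tranclD)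
    then have "w = y" using detD[OF det] that(2) by metis
    then have "(y,y) \<in> E\<^sup>+" using \<open>(w,z) \<in> E\<^sup>*\<close> that(3) by (meson rtrancl_into_trancl1)
    then show False using ac unfolding acyclic_def by blast
  qed
  from chain[OF det assms(3) assms(4)] show ?thesis
    using key assms(5,6) by metis
qed

lemma player_no_in: "p \<in> players V E \<Longrightarrow> (u,p) \<notin> E"
  unfolding players_def in_nbrs_def by auto

lemma trancl_not_player: "(q,p) \<in> E\<^sup>+ \<Longrightarrow> p \<notin> players V E"
  using tranclD2 player_no_in by metis

lemma match_in: assumes "v \<in> matches V E" obtains u where "(u,v) \<in> E"
  using assms unfolding matches_def players_def in_nbrs_def by auto

lemma bracket_reach:
  assumes T: "single_elim_tournament V E" and B: "bracket V E B"
  shows "v \<in> V \<Longrightarrow> (B v, v) \<in> E\<^sup>*"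
proof (induction v rule: wf_induct[OF set_facts(4)[OF T]])
  case (1 v)
  show ?case
  proof (cases "v \<in> players V E")
    case True then show ?thesis using B unfolding bracket_def by auto
  next
    case False
    then have "v \<in> matches V E" using 1 unfolding matches_def by auto
    then obtain u where u: "u \<in> in_nbrs E v" "B v = B u" using B unfolding bracket_def by force
    have "u \<in> V" using u set_facts(2)[OF T] unfolding in_nbrs_def by auto
    have "(B u, u) \<in> E\<^sup>*" using 1 u \<open>u \<in> V\<close> unfolding in_nbrs_def by auto
    then show ?thesis using u unfolding in_nbrs_def by auto
  qed
qed

lemma bracket_player:
  assumes "bracket V E B" "v \<in> V" shows "B v \<in> players V E"
  using assms unfolding bracket_def by auto

lemma bracket_path:
  assumes T: "single_elim_tournament V E" and B: "bracket V E B"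
    and xy: "(x,y) \<in> E\<^sup>*"
  shows "y \<in> V \<Longrightarrow> (p,x) \<in> E\<^sup>* \<Longrightarrow> B y = p \<Longrightarrow> B x = p"
  using xy
proof (induction y rule: rtrancl_induct)
  case base then show ?case by simp
next
  case (step z y)
  have EV: "E \<subseteq> V \<times> V" using set_facts[OF T] by auto
  have "z \<in> V" using step.hyps(2) EV by auto
  have "y \<notin> players V E" using step.hyps(2) player_no_in by metis
  then have "y \<in> matches V E" using step.prems unfolding matches_def by auto
  then obtain u where u: "u \<in> in_nbrs E y" "B y = B u" using B unfolding bracket_def by force
  have "u \<in> V" using u EV unfolding in_nbrs_def by auto
  have "(p,u) \<in> E\<^sup>*" using bracket_reach[OF T B \<open>u\<in>V\<close>] u step.prems by simp
  moreover have "(p,z) \<in> E\<^sup>*" using step.prems(2) step.hyps(1) by simp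
  ultimately have "u = z" using unique_pred[OF set_facts(5,3)[OF T]] u step.hyps(2)
    unfolding in_nbrs_def by blast
  then show ?case using step.IH \<open>z\<in>V\<close> step.prems u by simp
qed


lemma reach_player:
  assumes T: "single_elim_tournament V E"
  shows "x \<in> V \<Longrightarrow> \<exists>p \<in> players V E. (p,x) \<in> E\<^sup>*"
proof (induction x rule: wf_induct[OF set_facts(4)[OF T]])
  case (1 v)
  show ?case
  proof (cases "v \<in> players V E")
    case True then show ?thesis by blast
  next
    case False
    then obtain u where "(u,v) \<in> E" unfolding players_def in_nbrs_def using 1 by auto
    then have "u \<in> V" using set_facts(2)[OF T] by auto
    then obtain p where "p \<in> players V E" "(p,u) \<in> E\<^sup>*" using 1 \<open>(u,v) \<in> E\<close> by blast
    then show ?thesis using \<open>(u,v) \<in> E\<close> by (meson rtrancl_into_rtrancl)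
  qed
qed

lemma players_sub: "players V E \<subseteq> V" unfolding players_def by auto
lemma matches_sub: "matches V E \<subseteq> V" unfolding matches_def by auto
lemma matches_not_player: "x \<in> matches V E \<Longrightarrow> x \<notin> players V E" unfolding matches_def by auto

lemma rtrancl_to_player:
  assumes "a \<in> players V E" "(p,a) \<in> E\<^sup>*" shows "p = a"
  using assms(2) by (cases rule: rtranclE) (use assms(1) player_no_in in metis)+

lemma exists_bracket:
  assumes T: "single_elim_tournament V E"
  shows "\<exists>C. bracket V E C"
proof -
  let ?P = "players V E"
  have fP: "finite ?P" using set_facts(1)[OF T] players_sub[of V E] by (meson finite_subset)
  obtain g :: "'a \<Rightarrow> nat" and n where g: "inj_on g ?P" using finite_imp_inj_to_nat_seg[OF fP] by blast
  define L where "L x = {p \<in> ?P. (p,x) \<in> E\<^sup>*}" for x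
  define ism where "ism x p \<longleftrightarrow> p \<in> L x \<and> (\<forall>q\<in>L x. g p \<le> g q)" for x p
  have ex: "\<exists>p. ism x p" if xV: "x \<in> V" for x
  proof -
    obtain p where "p \<in> L x" using reach_player[OF T xV] unfolding L_def by blast
    then obtain p' where "p' \<in> L x" "\<forall>q. q \<in> L x \<longrightarrow> g p' \<le> g q"
      using ex_has_least_nat[of "\<lambda>q. q \<in> L x" p g] by blast
    then show ?thesis unfolding ism_def by blast
  qed
  have uq: "p = p'" if "ism x p" "ism x p'" for x p p'
  proof -
    have "g p = g p'" using that unfolding ism_def by (meson antisym)
    moreover have "p \<in> ?P" "p' \<in> ?P" using that unfolding ism_def L_def by auto
    ultimately show ?thesis using g by (meson inj_onD)
  qed
  define C where "C x = (if x \<in> V then (SOME p. ism x p) else undefined)" for x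
  have Cism: "ism x (C x)" if "x \<in> V" for x
    using ex[OF that] that unfolding C_def by (simp add: someI_ex)
  have "bracket V E C"
    unfolding bracket_def
  proof (intro conjI ballI)
    show "C \<in> extensional V" unfolding C_def extensional_def by auto
  next
    fix v assume "v \<in> V" then show "C v \<in> ?P" using Cism unfolding ism_def L_def by auto
  next
    fix a assume a: "a \<in> ?P"
    then have "a \<in> V" using players_sub[of V E] by auto
    have "C a \<in> L a" using Cism[OF \<open>a\<in>V\<close>] unfolding ism_def by auto
    then show "C a = a" using rtrancl_to_player[OF a] unfolding L_def by auto
  next
    fix x assume x: "x \<in> matches V E"
    then have xV: "x \<in> V" using matches_sub[of V E] by auto
    let ?p = "C x"
    have px: "ism x ?p" using Cism[OF xV] .
    then have "?p \<in> ?P" "(?p,x) \<in> E\<^sup>*" unfolding ism_def L_def by auto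
    moreover have "?p \<noteq> x" using x \<open>?p \<in> ?P\<close> matches_not_player by metis
    ultimately have "(?p,x) \<in> E\<^sup>+" by (meson rtranclD)
    then obtain u where u: "(?p,u) \<in> E\<^sup>*" "(u,x) \<in> E" by (meson tranclD2)
    have uV: "u \<in> V" using u(2) set_facts(2)[OF T] by auto
    have Lsub: "L u \<subseteq> L x" unfolding L_def using u(2) by (auto intro: rtrancl_into_rtrancl)
    have "ism u ?p" using px Lsub u(1) \<open>?p \<in> ?P\<close> unfolding ism_def L_def by auto
    then have "C u = ?p" using uq Cism[OF uV] by blast
    moreover have "u \<in> in_nbrs E x" using u(2) unfolding in_nbrs_def by auto
    ultimately show "C x \<in> C ` in_nbrs E x" by (metis image_eqI)
  qed
  then show ?thesis by blast
qed

definition qb :: "'v set \<Rightarrow> ('v \<times> 'v) set \<Rightarrow> ('v \<Rightarrow> 'v) \<Rightarrow> 'v \<Rightarrow> 'v \<Rightarrow> 'v" where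
  "qb V E C p = (\<lambda>x. if x \<in> V then (if (p,x) \<in> E\<^sup>+ then p else C x) else undefined)"

lemma qb_bracket:
  assumes T: "single_elim_tournament V E" and C: "bracket V E C" and p: "p \<in> players V E"
  shows "bracket V E (qb V E C p)"
  unfolding bracket_def
proof (intro conjI ballI)
  show "qb V E C p \<in> extensional V" unfolding qb_def extensional_def by auto
next
  fix v assume "v \<in> V" then show "qb V E C p v \<in> players V E"
    using p C unfolding qb_def bracket_def by auto
next
  fix a assume a: "a \<in> players V E"
  then have "(p,a) \<notin> E\<^sup>+" using trancl_not_player by metis
  moreover have "a \<in> V" using a players_sub[of V E] by auto
  ultimately show "qb V E C p a = a" using a C unfolding qb_def bracket_def by auto
next
  fix x assume x: "x \<in> matches V E"
  then have xV: "x \<in> V" using matches_sub[of V E] by auto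
  have EV: "E \<subseteq> V \<times> V" using set_facts(2)[OF T] .
  show "qb V E C p x \<in> qb V E C p ` in_nbrs E x"
  proof (cases "(p,x) \<in> E\<^sup>+")
    case True
    then obtain u where u: "(p,u) \<in> E\<^sup>*" "(u,x) \<in> E" by (meson tranclD2)
    have uV: "u \<in> V" using u(2) EV by auto
    have "qb V E C p u = p"
    proof (cases "u = p")
      case True
      have "(p,p) \<notin> E\<^sup>+" using set_facts(3)[OF T] unfolding acyclic_def by blast
      then show ?thesis using True uV p C unfolding qb_def bracket_def by auto
    next
      case False
      then have "(p,u) \<in> E\<^sup>+" using u(1) by (metis rtranclD)
      then show ?thesis using uV unfolding qb_def by auto
    qed
    moreover have "qb V E C p x = p" using True xV unfolding qb_def by auto
    moreover have "u \<in> in_nbrs E x" using u(2) unfolding in_nbrs_def by auto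
    ultimately show ?thesis by (metis image_eqI)
  next
    case False
    obtain u where u: "u \<in> in_nbrs E x" "C x = C u" using C x unfolding bracket_def by force
    have uV: "u \<in> V" using u(1) EV unfolding in_nbrs_def by auto
    have "(p,u) \<notin> E\<^sup>+" using False u(1) unfolding in_nbrs_def by (auto intro: trancl_into_trancl)
    then have "qb V E C p u = C u" using uV unfolding qb_def by auto
    moreover have "qb V E C p x = C x" using False xV unfolding qb_def by auto
    ultimately show ?thesis using u by (metis image_eqI)
  qed
qed


lemma score_alt:
  assumes "finite V"
  shows "score V E \<sigma> Q B = (\<Sum>x\<in>matches V E. if Q x = B x then \<sigma> x else 0)"
proof -
  have "finite (matches V E)" using assms matches_sub[of V E] by (meson finite_subset)
  then show ?thesis unfolding score_def by (simp add: sum.inter_filter)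
qed

lemma player_trancl:
  assumes T: "single_elim_tournament V E" and B: "bracket V E B" and x: "x \<in> matches V E"
  shows "(B x, x) \<in> E\<^sup>+"
proof -
  have xV: "x \<in> V" using x matches_sub[of V E] by auto
  have "(B x, x) \<in> E\<^sup>*" using bracket_reach[OF T B xV] .
  moreover have "B x \<in> players V E" using bracket_player[OF B xV] .
  then have "B x \<noteq> x" using x matches_not_player by metis
  ultimately show ?thesis by (metis rtranclD)
qed

lemma caseI:
  assumes T: "single_elim_tournament V E" and S: "scoring_system V E \<sigma>"
    and C: "bracket V E C" and B: "bracket V E B" and B': "bracket V E B'"
    and x: "x \<in> matches V E" and d: "B x \<noteq> B' x"
    and mn: "\<And>y. y \<in> matches V E \<Longrightarrow> B y \<noteq> B' y \<Longrightarrow> (y,x) \<notin> E\<^sup>+"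
  shows "score V E \<sigma> (qb V E C (B x)) B' + score V E \<sigma> (qb V E C (B' x)) B
       < score V E \<sigma> (qb V E C (B x)) B + score V E \<sigma> (qb V E C (B' x)) B'"
proof -
  define a where "a = B x"
  define b where "b = B' x"
  let ?M = "matches V E"
  have fV: "finite V" using set_facts(1)[OF T] .
  have fM: "finite ?M" using fV matches_sub[of V E] by (meson finite_subset)
  have det: "detE E" and ac: "acyclic E" using set_facts[OF T] by auto
  have ax: "(a,x) \<in> E\<^sup>+" unfolding a_def using player_trancl[OF T B x] .
  have bx: "(b,x) \<in> E\<^sup>+" unfolding b_def using player_trancl[OF T B' x] .
  define f where "f y = (if qb V E C a y = B' y then \<sigma> y else 0) + (if qb V E C b y = B y then \<sigma> y else 0)" for y
  define g where "g y = (if qb V E C a y = B y then \<sigma> y else 0) + (if qb V E C b y = B' y then \<sigma> y else 0)" for y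
  have pos: "\<sigma> y > 0" if "y \<in> ?M" for y using S that unfolding scoring_system_def by auto
  have pw: "f y \<le> g y \<and> (y = x \<longrightarrow> f y < g y)" if yM: "y \<in> ?M" for y
  proof (cases "B y = B' y")
    case True
    then have "y \<noteq> x" using d by auto
    then show ?thesis unfolding f_def g_def using True by auto
  next
    case False
    have yV: "y \<in> V" using yM matches_sub[of V E] by auto
    show ?thesis
    proof (cases "(x,y) \<in> E\<^sup>*")
      case True
      have ay: "(a,y) \<in> E\<^sup>+" using ax True by (meson trancl_rtrancl_trancl)
      have by': "(b,y) \<in> E\<^sup>+" using bx True by (meson trancl_rtrancl_trancl)
      have qa: "qb V E C a y = a" using ay yV unfolding qb_def by auto
      have qb': "qb V E C b y = b" using by' yV unfolding qb_def by auto
      have n1: "B' y \<noteq> a"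
      proof
        assume "B' y = a"
        moreover have "(a,x) \<in> E\<^sup>*" using ax by (rule trancl_into_rtrancl)
        ultimately have "B' x = a" using bracket_path[OF T B' True yV] by blast
        then show False using d a_def by simp
      qed
      have n2: "B y \<noteq> b"
      proof
        assume "B y = b"
        moreover have "(b,x) \<in> E\<^sup>*" using bx by (rule trancl_into_rtrancl)
        ultimately have "B x = b" using bracket_path[OF T B True yV] by blast
        then show False using d b_def by simp
      qed
      have "f y = 0" unfolding f_def using qa qb' n1 n2 by auto
      moreover have "y = x \<longrightarrow> g y = 2 * \<sigma> y" unfolding g_def using qa qb' a_def b_def by auto
      moreover have "g y \<ge> 0" unfolding g_def using pos[OF yM] by auto
      ultimately show ?thesis using pos[OF yM] by auto
    next
      case nxy: False
      have notr: "(q,y) \<notin> E\<^sup>+" if qx: "(q,x) \<in> E\<^sup>+" for q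
      proof
        assume qy: "(q,y) \<in> E\<^sup>+"
        have "(x,y) \<in> E\<^sup>* \<or> (y,x) \<in> E\<^sup>*"
          using chain[OF det] qx qy by (meson trancl_into_rtrancl)
        then have "(y,x) \<in> E\<^sup>*" using nxy by auto
        moreover have "y \<noteq> x" using nxy by auto
        ultimately have "(y,x) \<in> E\<^sup>+" by (metis rtranclD)
        then show False using mn[OF yM False] by simp
      qed
      have "qb V E C a y = C y" using notr[OF ax] yV unfolding qb_def by auto
      moreover have "qb V E C b y = C y" using notr[OF bx] yV unfolding qb_def by auto
      moreover have "y \<noteq> x" using nxy by auto
      ultimately show ?thesis unfolding f_def g_def by auto
    qed
  qed
  have "sum f ?M < sum g ?M"
    by (rule sum_strict_mono_ex1[OF fM]) (use pw x in auto)
  then show ?thesis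
    unfolding score_alt[OF fV] f_def g_def a_def[symmetric] b_def[symmetric]
    by (simp add: sum.distrib)
qed

lemma caseII:
  assumes T: "single_elim_tournament V E" and S: "scoring_system V E \<sigma>"
    and C: "bracket V E C" and B: "bracket V E B" and B': "bracket V E B'"
    and x: "x \<in> matches V E" and d: "B x \<noteq> B' x"
    and up: "\<And>y. y \<in> matches V E \<Longrightarrow> B y \<noteq> B' y \<Longrightarrow> (x,y) \<in> E\<^sup>*"
  shows "score V E \<sigma> (qb V E C (B' x)) B < score V E \<sigma> (qb V E C (B' x)) B'"
proof -
  define b where "b = B' x"
  let ?M = "matches V E"
  have fV: "finite V" using set_facts(1)[OF T] .
  have fM: "finite ?M" using fV matches_sub[of V E] by (meson finite_subset)
  have bx: "(b,x) \<in> E\<^sup>+" unfolding b_def using player_trancl[OF T B' x] .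
  define f where "f y = (if qb V E C b y = B y then \<sigma> y else 0)" for y
  define g where "g y = (if qb V E C b y = B' y then \<sigma> y else 0)" for y
  have pos: "\<sigma> y > 0" if "y \<in> ?M" for y using S that unfolding scoring_system_def by auto
  have pw: "f y \<le> g y \<and> (y = x \<longrightarrow> f y < g y)" if yM: "y \<in> ?M" for y
  proof (cases "B y = B' y")
    case True
    then have "y \<noteq> x" using d by auto
    then show ?thesis unfolding f_def g_def using True by auto
  next
    case False
    have yV: "y \<in> V" using yM matches_sub[of V E] by auto
    have xy: "(x,y) \<in> E\<^sup>*" using up[OF yM False] .
    have by': "(b,y) \<in> E\<^sup>+" using bx xy by (meson trancl_rtrancl_trancl)
    have qb': "qb V E C b y = b" using by' yV unfolding qb_def by auto
    have n2: "B y \<noteq> b"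
    proof
      assume "B y = b"
      moreover have "(b,x) \<in> E\<^sup>*" using bx by (rule trancl_into_rtrancl)
      ultimately have "B x = b" using bracket_path[OF T B xy yV] by blast
      then show False using d b_def by simp
    qed
    have "f y = 0" unfolding f_def using qb' n2 by auto
    moreover have "y = x \<longrightarrow> g y = \<sigma> y" unfolding g_def using qb' b_def by auto
    moreover have "g y \<ge> 0" unfolding g_def using pos[OF yM] by auto
    ultimately show ?thesis using pos[OF yM] by auto
  qed
  have "sum f ?M < sum g ?M"
    by (rule sum_strict_mono_ex1[OF fM]) (use pw x in auto)
  then show ?thesis
    unfolding score_alt[OF fV] f_def g_def b_def[symmetric] by simp
qed


lemma resolve_main:
  assumes T: "single_elim_tournament V E" and S: "scoring_system V E \<sigma>"
    and C: "bracket V E C" and a0: "a0 \<in> players V E"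
    and B: "bracket V E B" and B': "bracket V E B'" and ne: "B \<noteq> B'"
  shows "\<exists>p \<in> players V E - {a0}. score V E \<sigma> (qb V E C p) B \<noteq> score V E \<sigma> (qb V E C p) B'"
proof (rule ccontr)
  assume nex: "\<not> ?thesis"
  then have eq: "\<And>p. p \<in> players V E \<Longrightarrow> p \<noteq> a0 \<Longrightarrow> score V E \<sigma> (qb V E C p) B = score V E \<sigma> (qb V E C p) B'"
    by blast
  let ?M = "matches V E"
  define D where "D = {y \<in> ?M. B y \<noteq> B' y}"
  have det: "detE E" and wfE: "wf E" using set_facts[OF T] by auto
  have wfT: "wf (E\<^sup>+)" using wfE by (rule wf_trancl)
  obtain v where v: "B v \<noteq> B' v" using ne by blast
  have vV: "v \<in> V"
  proof (rule ccontr)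
    assume "v \<notin> V"
    then have "B v = undefined" "B' v = undefined" using B B' unfolding bracket_def extensional_def by auto
    then show False using v by simp
  qed
  have "v \<notin> players V E" using v B B' unfolding bracket_def by auto
  then have vD: "v \<in> D" unfolding D_def matches_def using vV v by auto
  have DM: "D \<subseteq> ?M" unfolding D_def by auto
  have mplayer: "B y \<in> players V E" "B' y \<in> players V E" if "y \<in> ?M" for y
    using bracket_player[OF B] bracket_player[OF B'] that matches_sub[of V E] by auto
  show False
  proof (cases "\<exists>y \<in> D. (a0,y) \<notin> E\<^sup>+")
    case True
    then obtain y where yD: "y \<in> D" and ny: "(a0,y) \<notin> E\<^sup>+" by blast
    let ?Dy = "{x \<in> D. (x,y) \<in> E\<^sup>*}"
    have yDy: "y \<in> ?Dy" using yD by simp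
    obtain x where xDy: "x \<in> ?Dy" and xmin: "\<And>z. (z,x) \<in> E\<^sup>+ \<Longrightarrow> z \<notin> ?Dy"
      by (rule wfE_min[OF wfT yDy]) blast
    have xM: "x \<in> ?M" and dx: "B x \<noteq> B' x" using xDy unfolding D_def by auto
    have xy: "(x,y) \<in> E\<^sup>*" using xDy by auto
    have mn: "(z,x) \<notin> E\<^sup>+" if "z \<in> ?M" "B z \<noteq> B' z" for z
    proof
      assume zx: "(z,x) \<in> E\<^sup>+"
      then have "(z,y) \<in> E\<^sup>*" using xy by (meson rtrancl_trans trancl_into_rtrancl)
      then have "z \<in> ?Dy" using that unfolding D_def by auto
      then show False using xmin zx by blast
    qed
    have na: "B x \<noteq> a0" "B' x \<noteq> a0"
    proof -
      show "B x \<noteq> a0"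
      proof
        assume "B x = a0"
        then have "(a0,x) \<in> E\<^sup>+" using player_trancl[OF T B xM] by simp
        then have "(a0,y) \<in> E\<^sup>+" using xy by (meson trancl_rtrancl_trancl)
        then show False using ny by simp
      qed
      show "B' x \<noteq> a0"
      proof
        assume "B' x = a0"
        then have "(a0,x) \<in> E\<^sup>+" using player_trancl[OF T B' xM] by simp
        then have "(a0,y) \<in> E\<^sup>+" using xy by (meson trancl_rtrancl_trancl)
        then show False using ny by simp
      qed
    qed
    note lt = caseI[OF T S C B B' xM dx mn]
    have "score V E \<sigma> (qb V E C (B x)) B = score V E \<sigma> (qb V E C (B x)) B'"
      using eq mplayer[OF xM] na by blast
    moreover have "score V E \<sigma> (qb V E C (B' x)) B = score V E \<sigma> (qb V E C (B' x)) B'"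
      using eq mplayer[OF xM] na by blast
    ultimately show False using lt by simp
  next
    case False
    then have allD: "\<And>y. y \<in> D \<Longrightarrow> (a0,y) \<in> E\<^sup>+" by blast
    obtain x where xD: "x \<in> D" and xmin: "\<And>z. (z,x) \<in> E\<^sup>+ \<Longrightarrow> z \<notin> D"
      by (rule wfE_min[OF wfT vD]) blast
    have xM: "x \<in> ?M" and dx: "B x \<noteq> B' x" using xD unfolding D_def by auto
    have up: "(x,y) \<in> E\<^sup>*" if "y \<in> ?M" "B y \<noteq> B' y" for y
    proof -
      have yD: "y \<in> D" using that unfolding D_def by auto
      have "(a0,x) \<in> E\<^sup>*" "(a0,y) \<in> E\<^sup>*" using allD[OF xD] allD[OF yD] by (auto intro: trancl_into_rtrancl)
      then have "(x,y) \<in> E\<^sup>* \<or> (y,x) \<in> E\<^sup>*" using chain[OF det] by blast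
      moreover have "(y,x) \<notin> E\<^sup>+" using xmin yD by blast
      ultimately show ?thesis by (metis rtranclD rtrancl.rtrancl_refl)
    qed
    show False
    proof (cases "B' x = a0")
      case False
      have "score V E \<sigma> (qb V E C (B' x)) B < score V E \<sigma> (qb V E C (B' x)) B'"
        using caseII[OF T S C B B' xM dx up] by blast
      moreover have "score V E \<sigma> (qb V E C (B' x)) B = score V E \<sigma> (qb V E C (B' x)) B'"
        using eq mplayer[OF xM] False by blast
      ultimately show False by simp
    next
      case True
      then have nb: "B x \<noteq> a0" using dx by simp
      have up': "(x,y) \<in> E\<^sup>*" if "y \<in> ?M" "B' y \<noteq> B y" for y using up that by metis
      have "score V E \<sigma> (qb V E C (B x)) B' < score V E \<sigma> (qb V E C (B x)) B"
        using caseII[OF T S C B' B xM dx[symmetric] up'] by blast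
      moreover have "score V E \<sigma> (qb V E C (B x)) B = score V E \<sigma> (qb V E C (B x)) B'"
        using eq mplayer[OF xM] nb by blast
      ultimately show False by simp
    qed
  qed
qed

theorem theorem1p6:
  fixes V :: "'v set" and E :: "('v \<times> 'v) set" and \<sigma> :: "'v \<Rightarrow> real"
  assumes "single_elim_tournament V E"
    and "scoring_system V E \<sigma>"
  shows "tdim V E \<sigma> \<le> card (players V E) - 1"
proof -
  note T = assms(1)
  have fV: "finite V" and EV: "E \<subseteq> V \<times> V" and wfE: "wf E" using set_facts[OF T] by auto
  have "sinks V E \<noteq> {}" using T unfolding single_elim_tournament_def by auto
  then obtain s where sV: "s \<in> V" unfolding sinks_def by auto
  obtain a0 where a0V: "a0 \<in> V" and a0min: "\<And>y. (y,a0) \<in> E \<Longrightarrow> y \<notin> V"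
    by (rule wfE_min[OF wfE sV]) blast
  have a0: "a0 \<in> players V E"
    unfolding players_def in_nbrs_def using a0V a0min EV by auto
  obtain C where C: "bracket V E C" using exists_bracket[OF T] by blast
  define S where "S = qb V E C ` (players V E - {a0})"
  have fP: "finite (players V E)" using fV players_sub[of V E] by (meson finite_subset)
  have fS: "finite S" unfolding S_def using fP by auto
  have cS: "card S \<le> card (players V E) - 1"
  proof -
    have "card S \<le> card (players V E - {a0})" unfolding S_def using fP by (simp add: card_image_le)
    also have "\<dots> = card (players V E) - 1" using a0 fP by simp
    finally show ?thesis .
  qed
  have res: "resolving V E \<sigma> S"
    unfolding resolving_def
  proof (intro conjI allI impI)
    show "S \<subseteq> {B. bracket V E B}" unfolding S_def using qb_bracket[OF T C] by auto
  next
    fix B B' assume "bracket V E B" "bracket V E B'" "B \<noteq> B'"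
    then obtain p where "p \<in> players V E - {a0}"
      "score V E \<sigma> (qb V E C p) B \<noteq> score V E \<sigma> (qb V E C p) B'"
      using resolve_main[OF T assms(2) C a0] by blast
    then show "\<exists>Bi\<in>S. score V E \<sigma> Bi B \<noteq> score V E \<sigma> Bi B'" unfolding S_def by blast
  qed
  have "tdim V E \<sigma> \<le> card S"
    unfolding tdim_def by (rule Least_le) (use fS res in blast)
  then show ?thesis using cS by simp
qed

end
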